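(* Let $A$ be a semiprime non-commutative associative algebra over $\Phi$ with center $Z$. Then: (i) the map $\mathrm{Inn}(A)\to \mathrm{Der}(A)/I_Z$, $\mathrm{ad}\,a\mapsto \mathrm{ad}\,a+I_Z$, is an injective Lie algebra homomorphism whose image is an essential ideal of $\mathrm{Der}(A)/I_Z$; (ii) if $Z$ contains no non-zero associative ideals of $A$ (in particular, if $A$ is prime), then $I_Z=0$.
   Context: $\Phi$ is a unital commutative ring in which $2$ and $3$ are invertible; all algebras are $\Phi$-modules. $\mathrm{Der}(A)$ is the Lie algebra (under $[\delta,\mu]=\delta\mu-\mu\delta$) of all associative derivations $\delta\colon A\to A$ ($\delta(xy)=\delta(x)y+x\delta(y)$). For $a\in A$, $\mathrm{ad}\,a\colon A\to A$, $y\mapsto ay-ya$, and $\mathrm{Inn}(A)=\{\mathrm{ad}\,a: a\in A\}$ is the ideal of inner derivations. $Z$ is the center of $A$ and $I_Z=\{\delta\in\mathrm{Der}(A): \delta(A)\subseteq Z\}$, a Lie ideal of $\mathrm{Der}(A)$. An ideal of a Lie algebra is essential if it has non-zero intersection with every non-zero ideal. *)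

theory Defs
  imports Complex_Main
begin

text \<open>An associative (not necessarily unital) algebra over the commutative ring of
  scalars 'k: the ring structure comes from the type class ring on 'a, and the
  scalar action sc makes 'a a 'k-module compatible with the multiplication.\<close>

definition assoc_algebra :: "('k::comm_ring_1 \<Rightarrow> 'a::ring \<Rightarrow> 'a) \<Rightarrow> bool" where
  "assoc_algebra sc \<longleftrightarrow> module sc \<and>
     (\<forall>r x y. sc r (x * y) = sc r x * y \<and> sc r (x * y) = x * sc r y)"

definition center :: "'a::ring set" where
  "center = {z. \<forall>x. z * x = x * z}"

definition alg_ideal :: "('k::comm_ring_1 \<Rightarrow> 'a::ring \<Rightarrow> 'a) \<Rightarrow> 'a set \<Rightarrow> bool" where
  "alg_ideal sc I \<longleftrightarrow> 0 \<in> I \<and> (\<forall>x\<in>I. \<forall>y\<in>I. x + y \<in> I) \<and> (\<forall>x\<in>I. - x \<in> I)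
     \<and> (\<forall>r. \<forall>x\<in>I. sc r x \<in> I) \<and> (\<forall>a. \<forall>x\<in>I. a * x \<in> I \<and> x * a \<in> I)"

definition semiprime :: "('k::comm_ring_1 \<Rightarrow> 'a::ring \<Rightarrow> 'a) \<Rightarrow> bool" where
  "semiprime sc \<longleftrightarrow> (\<forall>I. alg_ideal sc I \<and> (\<forall>x\<in>I. \<forall>y\<in>I. x * y = 0) \<longrightarrow> I = {0})"

definition prime_alg :: "('k::comm_ring_1 \<Rightarrow> 'a::ring \<Rightarrow> 'a) \<Rightarrow> bool" where
  "prime_alg sc \<longleftrightarrow> (\<forall>I J. alg_ideal sc I \<and> alg_ideal sc J \<and> (\<forall>x\<in>I. \<forall>y\<in>J. x * y = 0)
      \<longrightarrow> I = {0} \<or> J = {0})"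

definition Der :: "('k::comm_ring_1 \<Rightarrow> 'a::ring \<Rightarrow> 'a) \<Rightarrow> ('a \<Rightarrow> 'a) set" where
  "Der sc = {d. (\<forall>x y. d (x + y) = d x + d y) \<and> (\<forall>r x. d (sc r x) = sc r (d x))
                 \<and> (\<forall>x y. d (x * y) = d x * y + x * d y)}"

definition ad :: "'a::ring \<Rightarrow> 'a \<Rightarrow> 'a" where
  "ad a = (\<lambda>y. a * y - y * a)"

definition Inn :: "('a::ring \<Rightarrow> 'a) set" where
  "Inn = range ad"

definition IZ :: "('k::comm_ring_1 \<Rightarrow> 'a::ring \<Rightarrow> 'a) \<Rightarrow> ('a \<Rightarrow> 'a) set" where
  "IZ sc = {d \<in> Der sc. \<forall>x. d x \<in> center}"

definition fadd :: "('a::ring \<Rightarrow> 'a) \<Rightarrow> ('a \<Rightarrow> 'a) \<Rightarrow> 'a \<Rightarrow> 'a" where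
  "fadd d e = (\<lambda>x. d x + e x)"

definition fscale :: "('k \<Rightarrow> 'a \<Rightarrow> 'a) \<Rightarrow> 'k \<Rightarrow> ('a \<Rightarrow> 'a) \<Rightarrow> 'a \<Rightarrow> 'a" where
  "fscale sc r d = (\<lambda>x. sc r (d x))"

definition lie_br :: "('a::ring \<Rightarrow> 'a) \<Rightarrow> ('a \<Rightarrow> 'a) \<Rightarrow> 'a \<Rightarrow> 'a" where
  "lie_br d e = (\<lambda>x. d (e x) - e (d x))"

text \<open>The quotient Lie algebra Der(A)/I_Z: elements are cosets d + I_Z (as sets).\<close>
definition coset :: "('k::comm_ring_1 \<Rightarrow> 'a::ring \<Rightarrow> 'a) \<Rightarrow> ('a \<Rightarrow> 'a) \<Rightarrow> ('a \<Rightarrow> 'a) set" where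
  "coset sc d = {fadd d m | m. m \<in> IZ sc}"

definition quot :: "('k::comm_ring_1 \<Rightarrow> 'a::ring \<Rightarrow> 'a) \<Rightarrow> ('a \<Rightarrow> 'a) set set" where
  "quot sc = coset sc ` Der sc"

definition qadd :: "('k::comm_ring_1 \<Rightarrow> 'a::ring \<Rightarrow> 'a) \<Rightarrow> ('a \<Rightarrow> 'a) set \<Rightarrow> ('a \<Rightarrow> 'a) set \<Rightarrow> ('a \<Rightarrow> 'a) set" where
  "qadd sc X Y = {fadd (fadd d e) m | d e m. d \<in> X \<and> e \<in> Y \<and> m \<in> IZ sc}"

definition qscale :: "('k::comm_ring_1 \<Rightarrow> 'a::ring \<Rightarrow> 'a) \<Rightarrow> 'k \<Rightarrow> ('a \<Rightarrow> 'a) set \<Rightarrow> ('a \<Rightarrow> 'a) set" where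
  "qscale sc r X = {fadd (fscale sc r d) m | d m. d \<in> X \<and> m \<in> IZ sc}"

definition qbr :: "('k::comm_ring_1 \<Rightarrow> 'a::ring \<Rightarrow> 'a) \<Rightarrow> ('a \<Rightarrow> 'a) set \<Rightarrow> ('a \<Rightarrow> 'a) set \<Rightarrow> ('a \<Rightarrow> 'a) set" where
  "qbr sc X Y = {fadd (lie_br d e) m | d e m. d \<in> X \<and> e \<in> Y \<and> m \<in> IZ sc}"

text \<open>Zero of the quotient is the coset I_Z itself. A Lie ideal of the quotient.\<close>
definition quot_lie_ideal :: "('k::comm_ring_1 \<Rightarrow> 'a::ring \<Rightarrow> 'a) \<Rightarrow> ('a \<Rightarrow> 'a) set set \<Rightarrow> bool" where
  "quot_lie_ideal sc S \<longleftrightarrow> S \<subseteq> quot sc \<and> IZ sc \<in> S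
     \<and> (\<forall>X\<in>S. \<forall>Y\<in>S. qadd sc X Y \<in> S) \<and> (\<forall>r. \<forall>X\<in>S. qscale sc r X \<in> S)
     \<and> (\<forall>X\<in>S. \<forall>Y\<in>quot sc. qbr sc Y X \<in> S)"

definition quot_essential :: "('k::comm_ring_1 \<Rightarrow> 'a::ring \<Rightarrow> 'a) \<Rightarrow> ('a \<Rightarrow> 'a) set set \<Rightarrow> bool" where
  "quot_essential sc S \<longleftrightarrow> quot_lie_ideal sc S \<and>
     (\<forall>T. quot_lie_ideal sc T \<and> T \<noteq> {IZ sc} \<longrightarrow> S \<inter> T \<noteq> {IZ sc})"

end

theory Submission
  imports Defs
begin

locale alg = module sc for sc :: "'k::comm_ring_1 \<Rightarrow> 'a::ring \<Rightarrow> 'a" +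
  assumes ml: "sc r (x*y) = sc r x * y" and mr: "sc r (x*y) = x * sc r y"
begin

lemma ideal_Inter: "alg_ideal sc (\<Inter>{I. alg_ideal sc I \<and> (a::'a) \<in> I})"
  unfolding alg_ideal_def by auto

lemma SP:
  fixes a :: 'a
  assumes sp: "semiprime sc" and h1: "\<And>w. a*w*a = 0" and h2: "a*a = 0"
  shows "a = 0"
proof -
  define J where "J = \<Inter>{I. alg_ideal sc I \<and> a \<in> I}"
  have J: "alg_ideal sc J" unfolding J_def by (rule ideal_Inter)
  have aJ: "a \<in> J" unfolding J_def by auto
  define I1 where "I1 = {y. \<forall>w. a*w*y = 0 \<and> a*y = 0}"
  have "alg_ideal sc I1"
    unfolding alg_ideal_def
  proof (intro conjI ballI allI)
    show "0 \<in> I1" unfolding I1_def by simp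
  next
    fix x y assume "x \<in> I1" "y \<in> I1"
    then show "x + y \<in> I1" unfolding I1_def by (simp add: distrib_left)
  next
    fix x assume "x \<in> I1"
    then show "- x \<in> I1" unfolding I1_def by simp
  next
    fix r x assume "x \<in> I1"
    then show "sc r x \<in> I1" unfolding I1_def by (simp add: mr[symmetric])
  next
    fix b x assume "x \<in> I1"
    hence h: "\<And>w. a*w*x = 0" "a*x = 0" unfolding I1_def by auto
    have "a*w*(b*x) = 0" for w using h(1)[of "w*b"] by (simp add: mult.assoc)
    moreover have "a*(b*x) = 0" using h(1)[of b] by (simp add: mult.assoc)
    moreover have "a*w*(x*b) = 0" for w using h(1)[of w] by (metis mult.assoc mult_zero_left)
    moreover have "a*(x*b) = 0" using h(2) by (metis mult.assoc mult_zero_left)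
    ultimately show "b * x \<in> I1" "x * b \<in> I1" unfolding I1_def by auto
  qed
  moreover have "a \<in> I1" unfolding I1_def using h1 h2 by auto
  ultimately have JI1: "J \<subseteq> I1" unfolding J_def by auto
  define I2 where "I2 = {x. \<forall>y\<in>J. x*y = 0 \<and> (\<forall>w. x*w*y = 0)}"
  have Jm: "\<And>b z. z \<in> J \<Longrightarrow> b*z \<in> J" using J unfolding alg_ideal_def by auto
  have "alg_ideal sc I2"
    unfolding alg_ideal_def
  proof (intro conjI ballI allI)
    show "0 \<in> I2" unfolding I2_def by simp
  next
    fix x y assume "x \<in> I2" "y \<in> I2"
    then show "x + y \<in> I2" unfolding I2_def by (simp add: distrib_right)
  next
    fix x assume "x \<in> I2"
    then show "- x \<in> I2" unfolding I2_def by simp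
  next
    fix r x assume "x \<in> I2"
    then show "sc r x \<in> I2" unfolding I2_def by (simp add: ml[symmetric])
  next
    fix b x assume "x \<in> I2"
    hence h: "\<And>y w. y \<in> J \<Longrightarrow> x*w*y = 0" "\<And>y. y \<in> J \<Longrightarrow> x*y = 0" unfolding I2_def by auto
    have "b*x*w*y = 0" if "y \<in> J" for w y using h(1)[OF that, of w] by (metis mult.assoc mult_zero_right)
    moreover have "b*x*y = 0" if "y \<in> J" for y using h(2)[OF that] by (metis mult.assoc mult_zero_right)
    moreover have "x*b*w*y = 0" if "y \<in> J" for w y using h(1)[OF that, of "b*w"] by (simp add: mult.assoc)
    moreover have "x*b*y = 0" if "y \<in> J" for y using h(2)[OF Jm[OF that, of b]] by (simp add: mult.assoc)
    ultimately show "b * x \<in> I2" "x * b \<in> I2" unfolding I2_def by auto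
  qed
  moreover have "a \<in> I2" unfolding I2_def using JI1 unfolding I1_def by auto
  ultimately have "J \<subseteq> I2" unfolding J_def by auto
  hence "\<forall>x\<in>J. \<forall>y\<in>J. x*y = 0" unfolding I2_def by auto
  hence "J = {0}" using sp J unfolding semiprime_def by auto
  thus ?thesis using aJ by auto
qed

lemma central_nil:
  fixes z :: 'a
  assumes sp: "semiprime sc" and z: "z \<in> center" and zz: "z*z = 0"
  shows "z = 0"
proof (rule SP[OF sp])
  fix w have "z*w = w*z" using z unfolding center_def by auto
  hence "z*w*z = w*(z*z)" by (simp add: mult.assoc[symmetric])
  thus "z*w*z = 0" using zz by simp
qed (fact zz)


lemma center_mem: "z \<in> center \<Longrightarrow> z * x = x * z" unfolding center_def by auto

lemma center_add: "z \<in> center \<Longrightarrow> z' \<in> center \<Longrightarrow> z + z' \<in> center"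
  unfolding center_def by (simp add: distrib_left distrib_right)
lemma center_diff: "z \<in> center \<Longrightarrow> z' \<in> center \<Longrightarrow> z - z' \<in> center"
  unfolding center_def by (simp add: left_diff_distrib right_diff_distrib)
lemma center_neg: "z \<in> center \<Longrightarrow> - z \<in> center"
  unfolding center_def by simp
lemma center_zero: "0 \<in> center"
  unfolding center_def by simp
lemma center_sc: "z \<in> center \<Longrightarrow> sc r z \<in> center"
  unfolding center_def by (simp add: ml[symmetric] mr[symmetric])

lemma Der_D: assumes "d \<in> Der sc"
  shows "d (x + y) = d x + d y" "d (sc r x) = sc r (d x)" "d (x * y) = d x * y + x * d y"
  using assms unfolding Der_def by auto

lemma Der_0: "d \<in> Der sc \<Longrightarrow> d 0 = 0"
  using Der_D(1)[of d 0 0] by simp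
lemma Der_neg: "d \<in> Der sc \<Longrightarrow> d (- x) = - d x"
  using Der_D(1)[of d x "-x"] Der_0[of d] by (simp add: eq_neg_iff_add_eq_0 add.commute)
lemma Der_diff: "d \<in> Der sc \<Longrightarrow> d (x - y) = d x - d y"
  using Der_D(1)[of d x "-y"] Der_neg[of d y] by simp

lemma der_center: assumes d: "d \<in> Der sc" and z: "z \<in> center" shows "d z \<in> center"
  unfolding center_def
proof (rule CollectI, rule allI)
  fix x
  have "d (z*x) = d (x*z)" using center_mem[OF z] by simp
  hence "d z * x + z * d x = d x * z + x * d z" using Der_D(3)[OF d] by simp
  moreover have "z * d x = d x * z" using center_mem[OF z] by simp
  ultimately show "d z * x = x * d z" by simp
qed

lemma zero_Der: "(\<lambda>x. 0) \<in> Der sc" unfolding Der_def by simp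
lemma zero_IZ: "(\<lambda>x. 0) \<in> IZ sc" unfolding IZ_def using zero_Der center_zero by simp

lemma fadd_Der: "d \<in> Der sc \<Longrightarrow> e \<in> Der sc \<Longrightarrow> fadd d e \<in> Der sc"
  unfolding Der_def fadd_def by (auto simp: algebra_simps)
lemma fdiff_Der: "d \<in> Der sc \<Longrightarrow> e \<in> Der sc \<Longrightarrow> (\<lambda>x. d x - e x) \<in> Der sc"
  unfolding Der_def by (auto simp: algebra_simps)
lemma fscale_Der: "d \<in> Der sc \<Longrightarrow> fscale sc r d \<in> Der sc"
  unfolding Der_def fscale_def by (auto simp: scale_right_distrib ml[symmetric] mr[symmetric] mult.commute)
lemma lie_Der: assumes "d \<in> Der sc" "e \<in> Der sc" shows "lie_br d e \<in> Der sc"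
  unfolding Der_def lie_br_def using Der_D[OF assms(1)] Der_D[OF assms(2)] Der_diff[OF assms(1)]
    Der_diff[OF assms(2)]
  by (auto simp: algebra_simps)

lemma IZ_D: "m \<in> IZ sc \<Longrightarrow> m \<in> Der sc" "m \<in> IZ sc \<Longrightarrow> m x \<in> center"
  unfolding IZ_def by auto

lemma fadd_IZ: "d \<in> IZ sc \<Longrightarrow> e \<in> IZ sc \<Longrightarrow> fadd d e \<in> IZ sc"
  unfolding IZ_def using fadd_Der[of d e] center_add by (auto simp: fadd_def)
lemma fdiff_IZ: "d \<in> IZ sc \<Longrightarrow> e \<in> IZ sc \<Longrightarrow> (\<lambda>x. d x - e x) \<in> IZ sc"
  unfolding IZ_def using fdiff_Der[of d e] center_diff by auto
lemma fscale_IZ: "d \<in> IZ sc \<Longrightarrow> fscale sc r d \<in> IZ sc"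
  unfolding IZ_def using fscale_Der[of d r] center_sc by (auto simp: fscale_def)
lemma lie_IZ1: "d \<in> Der sc \<Longrightarrow> m \<in> IZ sc \<Longrightarrow> lie_br d m \<in> IZ sc"
  unfolding IZ_def using lie_Der[of d m] center_diff der_center[of d] by (auto simp: lie_br_def)
lemma lie_IZ2: "d \<in> Der sc \<Longrightarrow> m \<in> IZ sc \<Longrightarrow> lie_br m d \<in> IZ sc"
  unfolding IZ_def using lie_Der[of m d] center_diff der_center[of d] by (auto simp: lie_br_def)

lemma ad_Der: "ad a \<in> Der sc"
  unfolding Der_def ad_def by (auto simp: algebra_simps ml[symmetric] mr[symmetric])

lemma CD: assumes d: "d \<in> Der sc" and c: "\<And>x. d x \<in> center"
  shows "d x * (y*w - w*y) + d y * (x*w - w*x) = 0"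
proof -
  have "d (x*y) * w = w * d (x*y)" using center_mem[OF c] by simp
  hence "(d x * y + x * d y) * w = w * (d x * y + x * d y)" using Der_D(3)[OF d] by simp
  hence e: "d x*y*w + x*d y*w = w*d x*y + w*x*d y" by (simp add: algebra_simps)
  have "w*d x*y = d x*w*y" using center_mem[OF c, of x w] by simp
  moreover have "x*d y*w = d y*x*w" using center_mem[OF c, of y x] by simp
  moreover have "w*x*d y = d y*w*x" using center_mem[OF c, of y "w*x"] by (simp add: mult.assoc)
  ultimately have "d x*y*w + d y*x*w = d x*w*y + d y*w*x" using e by simp
  thus ?thesis by (simp add: algebra_simps)
qed


lemma self_coset: "D \<in> coset sc D"
proof -
  have "D = fadd D (\<lambda>x. 0)" by (simp add: fadd_def)
  thus ?thesis unfolding coset_def using zero_IZ by blast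
qed

lemma coset_IZ: assumes "D \<in> IZ sc" shows "coset sc D = IZ sc"
proof
  show "coset sc D \<subseteq> IZ sc" unfolding coset_def using fadd_IZ[OF assms] by auto
  show "IZ sc \<subseteq> coset sc D"
  proof
    fix m assume m: "m \<in> IZ sc"
    have "m = fadd D (\<lambda>x. m x - D x)" by (simp add: fadd_def)
    moreover have "(\<lambda>x. m x - D x) \<in> IZ sc" using fdiff_IZ[OF m assms] .
    ultimately show "m \<in> coset sc D" unfolding coset_def by blast
  qed
qed

lemma coset_eq_IZ: "coset sc D = IZ sc \<Longrightarrow> D \<in> IZ sc"
  using self_coset[of D] by simp

lemma coset_fadd: "coset sc (fadd D E) = qadd sc (coset sc D) (coset sc E)"
proof
  show "coset sc (fadd D E) \<subseteq> qadd sc (coset sc D) (coset sc E)"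
    unfolding coset_def[of sc "fadd D E"] qadd_def using self_coset[of D] self_coset[of E] by blast
  show "qadd sc (coset sc D) (coset sc E) \<subseteq> coset sc (fadd D E)"
  proof
    fix f assume "f \<in> qadd sc (coset sc D) (coset sc E)"
    then obtain m1 m2 m where mm: "m1 \<in> IZ sc" "m2 \<in> IZ sc" "m \<in> IZ sc"
      and f: "f = fadd (fadd (fadd D m1) (fadd E m2)) m"
      unfolding qadd_def coset_def by blast
    have "f = fadd (fadd D E) (fadd (fadd m1 m2) m)" unfolding f by (simp add: fadd_def algebra_simps)
    moreover have "fadd (fadd m1 m2) m \<in> IZ sc" using mm fadd_IZ by blast
    ultimately show "f \<in> coset sc (fadd D E)" unfolding coset_def by blast
  qed
qed

lemma coset_fscale: "coset sc (fscale sc r D) = qscale sc r (coset sc D)"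
proof
  show "coset sc (fscale sc r D) \<subseteq> qscale sc r (coset sc D)"
    unfolding coset_def[of sc "fscale sc r D"] qscale_def using self_coset[of D] by blast
  show "qscale sc r (coset sc D) \<subseteq> coset sc (fscale sc r D)"
  proof
    fix f assume "f \<in> qscale sc r (coset sc D)"
    then obtain m1 m where mm: "m1 \<in> IZ sc" "m \<in> IZ sc"
      and f: "f = fadd (fscale sc r (fadd D m1)) m"
      unfolding qscale_def coset_def by blast
    have "f = fadd (fscale sc r D) (fadd (fscale sc r m1) m)" unfolding f
      by (simp add: fadd_def fscale_def scale_right_distrib add.assoc)
    moreover have "fadd (fscale sc r m1) m \<in> IZ sc" using mm fadd_IZ fscale_IZ by blast
    ultimately show "f \<in> coset sc (fscale sc r D)" unfolding coset_def by blast
  qed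
qed

lemma coset_lie: assumes D: "D \<in> Der sc" and E: "E \<in> Der sc"
  shows "coset sc (lie_br D E) = qbr sc (coset sc D) (coset sc E)"
proof
  show "coset sc (lie_br D E) \<subseteq> qbr sc (coset sc D) (coset sc E)"
    unfolding coset_def[of sc "lie_br D E"] qbr_def using self_coset[of D] self_coset[of E] by blast
  show "qbr sc (coset sc D) (coset sc E) \<subseteq> coset sc (lie_br D E)"
  proof
    fix f assume "f \<in> qbr sc (coset sc D) (coset sc E)"
    then obtain m1 m2 m where mm: "m1 \<in> IZ sc" "m2 \<in> IZ sc" "m \<in> IZ sc"
      and f: "f = fadd (lie_br (fadd D m1) (fadd E m2)) m"
      unfolding qbr_def coset_def by blast
    define M where "M = fadd (fadd (fadd (lie_br D m2) (lie_br m1 E)) (lie_br m1 m2)) m"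
    have "f = fadd (lie_br D E) M" unfolding f M_def
      using Der_D(1)[OF D] Der_D(1)[OF E] Der_D(1)[OF IZ_D(1)[OF mm(1)]] Der_D(1)[OF IZ_D(1)[OF mm(2)]]
      by (simp add: fadd_def lie_br_def algebra_simps)
    moreover have "M \<in> IZ sc" unfolding M_def
      using mm fadd_IZ lie_IZ1[OF D mm(2)] lie_IZ2[OF E mm(1)] lie_IZ1[OF IZ_D(1)[OF mm(1)] mm(2)]
      by blast
    ultimately show "f \<in> coset sc (lie_br D E)" unfolding coset_def by blast
  qed
qed

lemma ad_add: "fadd (ad a) (ad b) = ad (a + b)"
  by (rule ext) (simp add: ad_def fadd_def algebra_simps)
lemma ad_sc: "fscale sc r (ad a) = ad (sc r a)"
  by (rule ext) (simp add: ad_def fscale_def scale_right_diff_distrib ml[symmetric] mr[symmetric])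
lemma ad_zero: "ad 0 = (\<lambda>x. 0)"
  by (rule ext) (simp add: ad_def)
lemma lie_ad: "D \<in> Der sc \<Longrightarrow> lie_br D (ad a) = ad (D a)"
  by (rule ext) (simp add: ad_def lie_br_def Der_diff Der_D(3) algebra_simps)
lemma lie_ad2: "D \<in> Der sc \<Longrightarrow> lie_br (ad a) D = ad (- D a)"
  by (rule ext) (simp add: ad_def lie_br_def Der_diff Der_D(3) algebra_simps)

lemma ad_central: assumes sp: "semiprime sc" and c: "ad c \<in> IZ sc" shows "c \<in> center"
  unfolding center_def
proof (rule CollectI, rule allI)
  fix x
  have "ad c x * (c*x - x*c) + ad c c * (x*x - x*x) = 0"
    using CD[OF IZ_D(1)[OF c] IZ_D(2)[OF c]] by blast
  hence "ad c x * ad c x = 0" by (simp add: ad_def)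
  hence "ad c x = 0" using central_nil[OF sp IZ_D(2)[OF c]] by blast
  thus "c * x = x * c" by (simp add: ad_def)
qed


definition NN :: "'a set" where
  "NN = {t. \<forall>y v w. t*(y*v - v*y) = 0 \<and> t*w*(y*v - v*y) = 0}"

lemma NN_ideal: "alg_ideal sc NN"
  unfolding alg_ideal_def
proof (intro conjI ballI allI)
  show "0 \<in> NN" unfolding NN_def by simp
next
  fix x y assume "x \<in> NN" "y \<in> NN"
  then show "x + y \<in> NN" unfolding NN_def by (simp add: distrib_right)
next
  fix x assume "x \<in> NN"
  then show "- x \<in> NN" unfolding NN_def by simp
next
  fix r x assume "x \<in> NN"
  then show "sc r x \<in> NN" unfolding NN_def by (simp add: ml[symmetric])
next
  fix b x assume "x \<in> NN"
  hence h: "\<And>y v w. x*w*(y*v - v*y) = 0" "\<And>y v. x*(y*v - v*y) = 0" unfolding NN_def by auto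
  have "b*x*w*(y*v - v*y) = 0" for w y v using h(1)[of w y v] by (metis mult.assoc mult_zero_right)
  moreover have "b*x*(y*v - v*y) = 0" for y v using h(2)[of y v] by (metis mult.assoc mult_zero_right)
  moreover have "x*b*w*(y*v - v*y) = 0" for w y v using h(1)[of "b*w" y v] by (simp add: mult.assoc)
  moreover have "x*b*(y*v - v*y) = 0" for y v
  proof -
    have eq: "b*(y*v - v*y) = (b*y*v - v*(b*y)) - (b*v - v*b)*y" by (simp add: algebra_simps)
    have "x*b*(y*v - v*y) = x*(b*(y*v - v*y))" by (simp add: mult.assoc)
    also have "\<dots> = x*((b*y)*v - v*(b*y)) - x*(b*v - v*b)*y"
      by (subst eq) (simp add: right_diff_distrib left_diff_distrib mult.assoc)
    finally have "x*b*(y*v - v*y) = x*((b*y)*v - v*(b*y)) - x*(b*v - v*b)*y" .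
    thus ?thesis using h(2) by simp
  qed
  ultimately show "b * x \<in> NN" "x * b \<in> NN" unfolding NN_def by auto
qed

lemma NN_center: assumes sp: "semiprime sc" shows "NN \<subseteq> center"
proof
  fix a assume a: "a \<in> NN"
  show "a \<in> center" unfolding center_def
  proof (rule CollectI, rule allI)
    fix x
    define c where "c = a*x - x*a"
    have "a*x \<in> NN" "x*a \<in> NN" using NN_ideal a unfolding alg_ideal_def by auto
    hence cN: "c \<in> NN" using NN_ideal unfolding alg_ideal_def c_def
      by (metis diff_conv_add_uminus)
    have "c = 0"
    proof (rule SP[OF sp])
      fix w show "c*w*c = 0" using cN unfolding NN_def c_def by blast
    next
      show "c*c = 0" using cN unfolding NN_def c_def by blast
    qed
    thus "a*x = x*a" unfolding c_def by simp
  qed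
qed

lemma IZ_trivial:
  assumes sp: "semiprime sc" and two: "\<exists>u::'k. 2 * u = 1"
    and hyp: "\<forall>I. alg_ideal sc I \<and> I \<subseteq> center \<longrightarrow> I = {0}"
    and d: "d \<in> IZ sc"
  shows "d = (\<lambda>x. 0)"
proof
  fix x
  obtain u :: 'k where u: "2*u = 1" using two by blast
  have half: "t = 0" if "t + t = 0" for t :: 'a
  proof -
    have "t = sc (2*u) t" using u by simp
    also have "\<dots> = sc u t + sc u t" by (simp only: mult_2 scale_left_distrib)
    also have "\<dots> = sc u (t + t)" by (simp only: scale_right_distrib)
    finally show ?thesis using that by simp
  qed
  have dD: "d \<in> Der sc" and dc: "\<And>x. d x \<in> center" using IZ_D d by auto
  have F: "\<And>x y w. d x * (y*w - w*y) + d y * (x*w - w*x) = 0" using CD[OF dD dc] .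
  have F1: "\<And>w. d x * (x*w - w*x) = 0" using half F by blast
  have G: "d x * w * (y*v - v*y) + d y * w * (x*v - v*x) = 0" for y w v
  proof -
    have "d x * w * (y*v - v*y) + d y * w * (x*v - v*x) =
      (d x*(y*(w*v) - (w*v)*y) + d y*(x*(w*v) - (w*v)*x)) - (d x*(y*w - w*y) + d y*(x*w - w*x))*v"
      by (simp add: algebra_simps)
    thus ?thesis using F by simp
  qed
  define z where "z = d x * d x"
  have Zw: "z * w * (y*v - v*y) = 0" for y w v
  proof -
    have "d x * (w * d x) * (y*v - v*y) + d y * (w * d x) * (x*v - v*x) = 0" using G by blast
    moreover have "d y * (w * d x) * (x*v - v*x) = d y * w * (d x * (x*v - v*x))" by (simp add: mult.assoc)
    moreover have "d x * (w * d x) = z * w" unfolding z_def using center_mem[OF dc, of x w]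
      by (simp add: mult.assoc)
    ultimately show ?thesis using F1 by simp
  qed
  have Z1: "z * (y*w - w*y) = 0" for y w
  proof -
    have "d x * (d x * (y*w - w*y) + d y * (x*w - w*x)) = 0" using F by simp
    moreover have "d x * (d y * (x*w - w*x)) = d y * (d x * (x*w - w*x))"
      using center_mem[OF dc, of x "d y"] by (simp add: mult.assoc[symmetric])
    ultimately show ?thesis using F1 unfolding z_def by (simp add: distrib_left mult.assoc)
  qed
  have "z \<in> NN" unfolding NN_def using Zw Z1 by blast
  moreover have "NN = {0}" using hyp NN_ideal NN_center[OF sp] by blast
  ultimately have "z = 0" by (metis singletonD)
  thus "d x = 0" using central_nil[OF sp dc] unfolding z_def by blast
qed

lemma prime_hyp:
  assumes pr: "prime_alg sc" and nc: "\<exists>x y::'a. x * y \<noteq> y * x"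
  shows "\<forall>I. alg_ideal sc I \<and> I \<subseteq> center \<longrightarrow> I = {0}"
proof (intro allI impI)
  fix I :: "'a set" assume H: "alg_ideal sc I \<and> I \<subseteq> center"
  hence I: "alg_ideal sc I" and Ic: "I \<subseteq> center" by auto
  obtain x0 y0 :: 'a where xy: "x0 * y0 \<noteq> y0 * x0" using nc by blast
  define K where "K = {t. \<forall>s\<in>I. s*t = 0}"
  have Im: "\<And>s b. s \<in> I \<Longrightarrow> s*b \<in> I" using I unfolding alg_ideal_def by auto
  have K: "alg_ideal sc K"
    unfolding alg_ideal_def
  proof (intro conjI ballI allI)
    show "0 \<in> K" unfolding K_def by simp
  next
    fix x y assume "x \<in> K" "y \<in> K"
    then show "x + y \<in> K" unfolding K_def by (simp add: distrib_left)
  next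
    fix x assume "x \<in> K"
    then show "- x \<in> K" unfolding K_def by simp
  next
    fix r x assume "x \<in> K"
    then show "sc r x \<in> K" unfolding K_def by (simp add: mr[symmetric])
  next
    fix b x assume x: "x \<in> K"
    have xk: "\<And>s. s \<in> I \<Longrightarrow> s * x = 0" using x unfolding K_def by blast
    have "s * (b * x) = 0" if "s \<in> I" for s
    proof -
      have "s * (b * x) = (s * b) * x" by (simp add: mult.assoc)
      also have "\<dots> = 0" using xk[OF Im[OF that]] .
      finally show ?thesis .
    qed
    thus "b * x \<in> K" unfolding K_def by blast
    have "s * (x * b) = 0" if "s \<in> I" for s
    proof -
      have "s * (x * b) = (s * x) * b" by (simp add: mult.assoc)
      also have "\<dots> = 0" using xk[OF that] by simp
      finally show ?thesis .
    qed
    thus "x * b \<in> K" unfolding K_def by blast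
  qed
  have "x0*y0 - y0*x0 \<in> K" unfolding K_def
  proof (rule CollectI, rule ballI)
    fix s assume s: "s \<in> I"
    have sc0: "s*x0 \<in> center" using Im[OF s] Ic by blast
    have scs: "s \<in> center" using s Ic by blast
    have "s*x0*y0 = y0*(s*x0)" by (rule center_mem[OF sc0])
    also have "\<dots> = s*y0*x0" using center_mem[OF scs, of y0] by (simp add: mult.assoc[symmetric])
    finally show "s*(x0*y0 - y0*x0) = 0" by (simp add: right_diff_distrib mult.assoc)
  qed
  hence "K \<noteq> {0}" using xy by auto
  moreover have "\<forall>x\<in>I. \<forall>y\<in>K. x * y = 0" unfolding K_def by auto
  ultimately show "I = {0}" using pr I K unfolding prime_alg_def by blast
qed

end

theorem lemma2p4:
  fixes sc :: "'k::comm_ring_1 \<Rightarrow> 'a::ring \<Rightarrow> 'a"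
  assumes "\<exists>u::'k. 2 * u = 1" and "\<exists>v::'k. 3 * v = 1"
    and "assoc_algebra sc"
    and "semiprime sc"
    and "\<exists>x y::'a. x * y \<noteq> y * x"
  shows "inj_on (coset sc) Inn
       \<and> (\<forall>d\<in>Inn. \<forall>e\<in>Inn. coset sc (fadd d e) = qadd sc (coset sc d) (coset sc e)
                        \<and> coset sc (lie_br d e) = qbr sc (coset sc d) (coset sc e))
       \<and> (\<forall>r. \<forall>d\<in>Inn. coset sc (fscale sc r d) = qscale sc r (coset sc d))
       \<and> quot_essential sc (coset sc ` Inn)
       \<and> ((\<forall>I. alg_ideal sc I \<and> I \<subseteq> center \<longrightarrow> I = {0}) \<longrightarrow> IZ sc = {\<lambda>x. 0})
       \<and> (prime_alg sc \<longrightarrow> IZ sc = {\<lambda>x. 0})"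
proof -
  have M: "module sc" and ax: "\<forall>r x y. sc r (x * y) = sc r x * y \<and> sc r (x * y) = x * sc r y"
    using assms(3) unfolding assoc_algebra_def by blast+
  have "alg sc"
    by (rule alg.intro[OF M], rule alg_axioms.intro) (use ax in blast)+
  then interpret alg sc .
  note sp = assms(4)
  have P1: "inj_on (coset sc) Inn"
    unfolding inj_on_def Inn_def
  proof (clarify)
    fix a b assume eq: "coset sc (ad a) = coset sc (ad b)"
    have "ad a \<in> coset sc (ad b)" using self_coset[of "ad a"] eq by simp
    then obtain m where m: "m \<in> IZ sc" "ad a = fadd (ad b) m" unfolding coset_def by blast
    have "m = ad (a - b)"
    proof
      fix x
      have "ad a x = ad b x + m x" using m(2) unfolding fadd_def by metis
      thus "m x = ad (a - b) x" by (simp add: ad_def algebra_simps)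
    qed
    hence "a - b \<in> center" using ad_central[OF sp] m(1) by simp
    hence "\<And>x. (a - b) * x = x * (a - b)" using center_mem by blast
    thus "ad a = ad b" unfolding ad_def by (intro ext) (simp add: algebra_simps)
  qed
  have InnDer: "\<And>d. d \<in> Inn \<Longrightarrow> d \<in> Der sc" unfolding Inn_def using ad_Der by auto
  have P2: "\<forall>d\<in>Inn. \<forall>e\<in>Inn. coset sc (fadd d e) = qadd sc (coset sc d) (coset sc e)
                        \<and> coset sc (lie_br d e) = qbr sc (coset sc d) (coset sc e)"
    using coset_fadd coset_lie InnDer by blast
  have P3: "\<forall>r. \<forall>d\<in>Inn. coset sc (fscale sc r d) = qscale sc r (coset sc d)"
    using coset_fscale by blast
  have IZ0: "coset sc (ad 0) = IZ sc" unfolding ad_zero by (rule coset_IZ[OF zero_IZ])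
  have LI: "quot_lie_ideal sc (coset sc ` Inn)"
    unfolding quot_lie_ideal_def
  proof (intro conjI ballI allI)
    show "coset sc ` Inn \<subseteq> quot sc" unfolding quot_def using InnDer by auto
    show "IZ sc \<in> coset sc ` Inn" unfolding Inn_def using IZ0 by (metis rangeI image_eqI)
  next
    fix X Y assume "X \<in> coset sc ` Inn" "Y \<in> coset sc ` Inn"
    then obtain a b where "X = coset sc (ad a)" "Y = coset sc (ad b)" unfolding Inn_def by auto
    hence "qadd sc X Y = coset sc (ad (a + b))" using coset_fadd ad_add by metis
    thus "qadd sc X Y \<in> coset sc ` Inn" unfolding Inn_def by auto
  next
    fix r X assume "X \<in> coset sc ` Inn"
    then obtain a where "X = coset sc (ad a)" unfolding Inn_def by auto
    hence "qscale sc r X = coset sc (ad (sc r a))" using coset_fscale ad_sc by metis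
    thus "qscale sc r X \<in> coset sc ` Inn" unfolding Inn_def by auto
  next
    fix X Y assume "X \<in> coset sc ` Inn" "Y \<in> quot sc"
    then obtain a D where D: "X = coset sc (ad a)" "Y = coset sc D" "D \<in> Der sc"
      unfolding Inn_def quot_def by auto
    hence "qbr sc Y X = coset sc (ad (D a))" using coset_lie[OF D(3) ad_Der] lie_ad[OF D(3)] by metis
    thus "qbr sc Y X \<in> coset sc ` Inn" unfolding Inn_def by auto
  qed
  have P4: "quot_essential sc (coset sc ` Inn)"
    unfolding quot_essential_def
  proof (intro conjI allI impI)
    show "quot_lie_ideal sc (coset sc ` Inn)" by (fact LI)
    fix T assume T: "quot_lie_ideal sc T \<and> T \<noteq> {IZ sc}"
    hence "IZ sc \<in> T" unfolding quot_lie_ideal_def by blast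
    then obtain X where X: "X \<in> T" "X \<noteq> IZ sc" using T by blast
    then obtain D where D: "X = coset sc D" "D \<in> Der sc"
      using T unfolding quot_lie_ideal_def quot_def by blast
    have "D \<notin> IZ sc" using coset_IZ D X by metis
    then obtain x where x: "D x \<notin> center" unfolding IZ_def using D by blast
    have "coset sc (ad x) \<in> quot sc" unfolding quot_def using ad_Der by blast
    hence "qbr sc (coset sc (ad x)) X \<in> T" using T X unfolding quot_lie_ideal_def by blast
    moreover have "qbr sc (coset sc (ad x)) X = coset sc (ad (- D x))"
      using coset_lie[OF ad_Der D(2)] lie_ad2[OF D(2)] D(1) by metis
    ultimately have inT: "coset sc (ad (- D x)) \<in> T" by simp
    have ne: "coset sc (ad (- D x)) \<noteq> IZ sc"
    proof
      assume "coset sc (ad (- D x)) = IZ sc"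
      hence "- D x \<in> center" using coset_eq_IZ ad_central[OF sp] by blast
      hence "D x \<in> center" using center_neg by fastforce
      thus False using x by simp
    qed
    have "coset sc (ad (- D x)) \<in> coset sc ` Inn" unfolding Inn_def by auto
    thus "coset sc ` Inn \<inter> T \<noteq> {IZ sc}" using inT ne by blast
  qed
  have P5: "(\<forall>I. alg_ideal sc I \<and> I \<subseteq> center \<longrightarrow> I = {0}) \<longrightarrow> IZ sc = {\<lambda>x. 0}"
    using IZ_trivial[OF sp assms(1)] zero_IZ by blast
  have P6: "prime_alg sc \<longrightarrow> IZ sc = {\<lambda>x. 0}"
    using P5 prime_hyp assms(5) by blast
  show ?thesis using P1 P2 P3 P4 P5 P6 by blast
qed

end
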